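(* Let $X=(X_0,X_1,\dots)$ be a Markov chain on $[0,\infty)$ with transition kernel $T(\cdot\mid x)$ such that $\int_0^\infty|y-x|^3T(dy\mid x)<\infty$ for all $x\ge0$; let $\mu_k(x)=\int_0^\infty(y-x)^kT(dy\mid x)$, $k=1,2,3$, and assume $\mu_2(x)>0$ for all sufficiently large $x$. Assume: (i) there is a function $\psi_1$ with $\mu_1(x)\le\frac{\mu_2(x)}{2x}[1+\psi_1(x)]$ for all sufficiently large $x$ and $\lim_{x\to\infty}(\log x)\psi_1(x)=0$; (ii) $\lim_{x\to\infty}\frac{\log x}{x}\frac{\mu_3(x)}{\mu_2(x)}=0$; (iii) for each positive integer $m$ there is $\delta=\delta(m)<1$ with $\sup_{x_0\in[0,m]}T([0,m]\mid x_0)\le\delta$. Then there exists $m\in(0,\infty)$ such that the set $C=[0,m)$ is recurrent.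
   Context: For a Borel set $C\subseteq[0,\infty)$, let $\tau_C$ be the smallest $n\ge1$ with $X_n\in C$ ($\infty$ if none). $C$ is recurrent if $P(\tau_C<\infty\mid X_0=x_0)=1$ for every $x_0\in[0,\infty)$. *)

theory Defs
  imports "HOL-Probability.Probability"
begin

abbreviation state_space :: "real measure" where
  "state_space \<equiv> restrict_space borel {0..}"

definition transition_kernel :: "(real \<Rightarrow> real measure) \<Rightarrow> bool" where
  "transition_kernel T \<longleftrightarrow> T \<in> state_space \<rightarrow>\<^sub>M prob_algebra state_space"

definition nat_filtration :: "'a measure \<Rightarrow> (nat \<Rightarrow> 'a \<Rightarrow> real) \<Rightarrow> nat \<Rightarrow> 'a set set" where
  "nat_filtration M X n =
     sigma_sets (space M) {X i -` D \<inter> space M | i D. i \<le> n \<and> D \<in> sets state_space}"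

definition markov_chain :: "'a measure \<Rightarrow> (nat \<Rightarrow> 'a \<Rightarrow> real) \<Rightarrow> (real \<Rightarrow> real measure) \<Rightarrow> bool" where
  "markov_chain M X T \<longleftrightarrow>
     prob_space M \<and>
     (\<forall>n. X n \<in> M \<rightarrow>\<^sub>M state_space) \<and>
     (\<forall>n A B. A \<in> nat_filtration M X n \<longrightarrow> B \<in> sets state_space \<longrightarrow>
        measure M (A \<inter> (X (Suc n) -` B \<inter> space M)) =
        (\<integral>\<omega>. indicator A \<omega> * measure (T (X n \<omega>)) B \<partial>M))"

definition recurrent_set :: "(real \<Rightarrow> real measure) \<Rightarrow> real set \<Rightarrow> bool" where
  "recurrent_set T C \<longleftrightarrow>
     (\<forall>x0 \<ge> 0. \<forall>(M :: (nat \<Rightarrow> real) measure) X.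
        markov_chain M X T \<longrightarrow> (AE \<omega> in M. X 0 \<omega> = x0) \<longrightarrow>
        measure M {\<omega> \<in> space M. \<exists>n\<ge>1. X n \<omega> \<in> C} = 1)"

definition moment :: "(real \<Rightarrow> real measure) \<Rightarrow> nat \<Rightarrow> real \<Rightarrow> real" where
  "moment T k x = (\<integral>y. (y - x) ^ k \<partial>T x)"

end

theory Submission
  imports Defs
begin
definition g1 :: "real \<Rightarrow> real" where "g1 x = 1 / (x * ln x)"
definition g2 :: "real \<Rightarrow> real" where "g2 x = - (ln x + 1) / (x^2 * (ln x)^2)"
definition g3 :: "real \<Rightarrow> real" where "g3 x = (2 * (ln x)^2 + 3 * ln x + 2) / (x^3 * (ln x)^3)"
definition g4 :: "real \<Rightarrow> real" where "g4 x = - (6 * (ln x)^3 + 11 * (ln x)^2 + 12 * ln x + 6) / (x^4 * (ln x)^4)"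

definition dd :: "nat \<Rightarrow> real \<Rightarrow> real" where
  "dd m = (if m = 0 then (\<lambda>x. ln (ln x)) else if m = 1 then g1 else if m = 2 then g2
           else if m = 3 then g3 else g4)"

lemma d01: "(t::real) > 1 \<Longrightarrow> DERIV (\<lambda>x. ln (ln x)) t :> 1 / (t * ln t)"
    apply (rule derivative_eq_intros refl | simp)+
    done
lemma d12: "(t::real) > 1 \<Longrightarrow> DERIV (\<lambda>x. 1 / (x * ln x)) t :> - (ln t + 1) / (t^2 * (ln t)^2)"
    apply (rule derivative_eq_intros refl | simp)+
    apply (simp add: field_simps power2_eq_square)
    done
lemma d23: "(t::real) > 1 \<Longrightarrow> DERIV (\<lambda>x. - (ln x + 1) / (x^2 * (ln x)^2)) t :> (2 * (ln t)^2 + 3 * ln t + 2) / (t^3 * (ln t)^3)"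
    apply (rule derivative_eq_intros refl | simp)+
    apply (simp add: field_simps power2_eq_square power3_eq_cube)
    done
lemma d34: "(t::real) > 1 \<Longrightarrow> DERIV (\<lambda>x. (2 * (ln x)^2 + 3 * ln x + 2) / (x^3 * (ln x)^3)) t :> - (6 * (ln t)^3 + 11 * (ln t)^2 + 12 * ln t + 6) / (t^4 * (ln t)^4)"
    apply (rule derivative_eq_intros refl | simp)+
    apply (simp add: field_simps eval_nat_numeral)
    done

lemma dd_deriv: "m < 4 \<Longrightarrow> (t::real) > 1 \<Longrightarrow> DERIV (dd m) t :> dd (Suc m) t"
proof -
  assume "m < 4" "t > 1"
  then have "m = 0 \<or> m = 1 \<or> m = 2 \<or> m = 3" by auto
  moreover have "dd 0 = (\<lambda>x. ln (ln x))" "dd 1 = (\<lambda>x. 1 / (x * ln x))"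
    "dd 2 = (\<lambda>x. - (ln x + 1) / (x^2 * (ln x)^2))"
    "dd 3 = (\<lambda>x. (2 * (ln x)^2 + 3 * ln x + 2) / (x^3 * (ln x)^3))"
    "dd 4 = (\<lambda>x. - (6 * (ln x)^3 + 11 * (ln x)^2 + 12 * ln x + 6) / (x^4 * (ln x)^4))"
    by (auto simp: dd_def g1_def[abs_def] g2_def[abs_def] g3_def[abs_def] g4_def[abs_def])
  ultimately show ?thesis using d01[OF \<open>t > 1\<close>] d12[OF \<open>t > 1\<close>] d23[OF \<open>t > 1\<close>] d34[OF \<open>t > 1\<close>]
    by (auto simp: numeral_2_eq_2 numeral_3_eq_3 eval_nat_numeral)
qed

lemma g4_neg: "(t::real) > 1 \<Longrightarrow> g4 t < 0"
proof -
  assume "t > 1"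
  then have l: "ln t > 0" by simp
  have "0 < 6 * (ln t)^3 + 11 * (ln t)^2 + 12 * ln t + 6"
    using l by (intro add_pos_pos mult_pos_pos zero_less_power) auto
  moreover have "0 < t^4 * (ln t)^4" using l \<open>t > 1\<close> by simp
  ultimately show ?thesis unfolding g4_def by (simp add: divide_neg_pos)
qed

lemma taylor_LL:
  assumes x: "(x::real) > 1" and y: "y > 1"
  shows "ln (ln y) \<le> ln (ln x) + g1 x * (y - x) + g2 x / 2 * (y - x)^2 + g3 x / 6 * (y - x)^3"
proof (cases "y = x")
  case True then show ?thesis by simp
next
  case False
  have "\<exists>t. (if y < x then y < t \<and> t < x else x < t \<and> t < y) \<and>
    ln (ln y) = (\<Sum>m<4. (dd m x / fact m) * (y - x)^m) + (dd 4 t / fact 4) * (y - x)^4"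
    apply (rule Taylor[where a = "min x y" and b = "max x y"])
    subgoal by simp
    subgoal by (simp add: dd_def)
    subgoal using x y by (metis dd_deriv less_le_trans min_less_iff_conj)
    using x y False by auto
  then obtain t where t0: "(if y < x then y < t \<and> t < x else x < t \<and> t < y)" and eq: "ln (ln y) = (\<Sum>m<4. (dd m x / fact m) * (y - x)^m) + (dd 4 t / fact 4) * (y - x)^4"
    by blast
  have t: "t > 1" using t0 x y by (auto split: if_splits)
  have "dd 4 t / fact 4 * (y - x)^4 \<le> 0"
    using g4_neg[OF t] by (intro mult_nonpos_nonneg) (auto simp: dd_def divide_nonpos_pos)
  moreover have "(\<Sum>m<4. (dd m x / fact m) * (y - x)^m) = ln (ln x) + g1 x * (y - x) + g2 x / 2 * (y - x)^2 + g3 x / 6 * (y - x)^3"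
    by (simp add: eval_nat_numeral dd_def)
  ultimately show ?thesis using eq by linarith
qed
definition VV :: "real \<Rightarrow> real" where "VV y = ln (ln (max y (exp 4)))"

definition PP :: "real \<Rightarrow> real \<Rightarrow> real" where
  "PP x y = ln (ln x) + g1 x * (y - x) + g2 x / 2 * (y - x)^2 + g3 x / 6 * (y - x)^3"

lemma VV_le_PP:
  assumes x: "x \<ge> exp 16" and y: "y \<ge> 0"
  shows "VV y \<le> PP x y"
proof (cases "y \<ge> exp 4")
  case True
  have e1: "exp 4 > (1::real)" by simp
  have e2: "exp 16 > (1::real)" by simp
  have "VV y = ln (ln y)" using True by (simp add: VV_def max_def)
  also have "\<dots> \<le> PP x y" unfolding PP_def
    apply (rule taylor_LL)
    using True x e1 e2 by linarith+
  finally show ?thesis .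
next
  case False
  define L where "L = ln x"
  have x0: "x > 0" using x exp_gt_zero[of 16] by linarith
  have L8: "L \<ge> 16" unfolding L_def using x x0 by (metis ln_exp ln_le_cancel_iff exp_gt_zero)
  have VY: "VV y = ln (ln (exp 4))" using False by (simp add: VV_def max_def)
  define d where "d = y - x"
  have "exp 4 \<le> (exp 16::real)" by simp
  then have d1: "d \<le> 0" "- x \<le> d" unfolding d_def using False x y by linarith+
  have t1: "- 1 / L \<le> g1 x * d"
  proof -
    have "(- x) / (x * L) \<le> d / (x * L)" using d1 x0 L8 by (intro divide_right_mono) auto
    moreover have "(- x) / (x * L) = - 1 / L" using x0 by simp
    moreover have "g1 x * d = d / (x * L)" by (simp add: g1_def L_def)
    ultimately show ?thesis by simp
  qed
  have t2: "- 1 / L \<le> g2 x / 2 * d^2"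
  proof -
    have "(-d)^2 \<le> x^2" using d1 by (intro power_mono) auto
    then have "d^2 \<le> x^2" by simp
    have "- ((L + 1) * x^2) / (2 * x^2 * L^2) \<le> - ((L + 1) * d^2) / (2 * x^2 * L^2)"
      using \<open>d^2 \<le> x^2\<close> L8 x0 by (intro divide_right_mono) (auto intro!: mult_left_mono)
    moreover have "g2 x / 2 * d^2 = - ((L + 1) * d^2) / (2 * x^2 * L^2)" by (simp add: g2_def L_def algebra_simps)
    moreover have "- ((L + 1) * x^2) / (2 * x^2 * L^2) = - (L + 1) / (2 * L^2)" using x0 L8 by (simp add: field_simps)
    moreover have "- 1 / L \<le> - (L + 1) / (2 * L^2)" using L8 by (simp add: field_simps power2_eq_square)
    ultimately show ?thesis by simp
  qed
  have t3: "- 2 / L \<le> g3 x / 6 * d^3"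
  proof -
    have "- (x^3) \<le> d^3"
    proof -
      have "(-d)^3 \<le> x^3" using d1 by (intro power_mono) auto
      then show ?thesis by simp
    qed
    have "((2 * L^2 + 3 * L + 2) * (- (x^3))) / (6 * x^3 * L^3) \<le> ((2 * L^2 + 3 * L + 2) * d^3) / (6 * x^3 * L^3)"
      using \<open>- (x^3) \<le> d^3\<close> L8 x0 by (intro divide_right_mono mult_left_mono) auto
    moreover have "g3 x / 6 * d^3 = ((2 * L^2 + 3 * L + 2) * d^3) / (6 * x^3 * L^3)" by (simp add: g3_def L_def)
    moreover have "((2 * L^2 + 3 * L + 2) * (- (x^3))) / (6 * x^3 * L^3) = - (2 * L^2 + 3 * L + 2) / (6 * L^3)" using x0 L8 by (simp add: field_simps)
    moreover have "- 2 / L \<le> - (2 * L^2 + 3 * L + 2) / (6 * L^3)"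
    proof -
      have "L * 16 \<le> L * L" using L8 by (intro mult_left_mono) auto
      then have "2 + L * 3 \<le> L * (L * 10)" using L8 by linarith
      then show ?thesis using L8 by (simp add: field_simps power2_eq_square power3_eq_cube)
    qed
    ultimately show ?thesis by simp
  qed
  have lnL: "ln 16 \<le> ln (ln x)" unfolding L_def[symmetric] using L8 by simp
  have q: "- 1 / L \<ge> - 1/16" using L8 by (simp add: field_simps)
  have "ln (16::real) = ln (4 * 4)" by simp
  also have "\<dots> = ln 4 + ln 4" by (rule ln_mult_pos) auto
  finally have "ln (16::real) = ln 4 + ln 4" .
  moreover have "1 \<le> ln (4::real)"
    using exp_le by (subst ln_ge_iff) auto
  ultimately show ?thesis using t1 t2 t3 VY lnL q
    unfolding PP_def d_def by simp
qed
lemma drift_alg: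
  fixes x m1 m2 m3 \<psi> :: real
  assumes x: "x \<ge> exp 16" and m2: "m2 > 0" and m1: "m1 \<le> m2 / (2 * x) * (1 + \<psi>)"
    and p: "ln x * \<psi> \<le> 1/4" and r: "ln x / x * (m3 / m2) \<le> 1/4"
  shows "g1 x * m1 + g2 x / 2 * m2 + g3 x / 6 * m3 \<le> 0"
proof -
  define L where "L = ln x"
  have x0: "x > 0" using x exp_gt_zero[of 16] by linarith
  have L8: "L \<ge> 16" unfolding L_def using x x0 by (metis ln_exp ln_le_cancel_iff exp_gt_zero)
  define K where "K = m2 / (2 * x^2 * L^2)"
  have K0: "K > 0" unfolding K_def using m2 x0 L8 by simp
  define pp where "pp = L * \<psi>"
  define rr where "rr = L / x * (m3 / m2)"
  define q where "q = (2 * L^2 + 3 * L + 2) / (3 * L^2)"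
  have g10: "g1 x > 0" unfolding g1_def L_def[symmetric] using x0 L8 by simp
  have A: "g1 x * m1 \<le> K * (L + pp)"
  proof -
    have "g1 x * m1 \<le> g1 x * (m2 / (2 * x) * (1 + \<psi>))" using g10 m1 by (intro mult_left_mono) auto
    also have "\<dots> = K * (L + pp)" unfolding g1_def K_def pp_def L_def[symmetric]
      using x0 L8 by (simp add: field_simps power2_eq_square)
    finally show ?thesis .
  qed
  have B: "g2 x / 2 * m2 = - K * (L + 1)" unfolding g2_def K_def L_def[symmetric]
    using x0 L8 by (simp add: field_simps power2_eq_square)
  have C: "g3 x / 6 * m3 = K * (rr * q)" unfolding g3_def K_def rr_def q_def L_def[symmetric]
    using x0 L8 m2 by (simp add: field_simps power2_eq_square power3_eq_cube)
  have q1: "q \<le> 1" "q > 0"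
  proof -
    have "L * 16 \<le> L * L" using L8 by (intro mult_left_mono) auto
    then have "2 + L * 3 \<le> L * L" using L8 by linarith
    then show "q \<le> 1" unfolding q_def using L8 by (simp add: field_simps power2_eq_square)
    show "q > 0" unfolding q_def using L8 by (intro divide_pos_pos add_pos_pos) auto
  qed
  have D: "rr * q \<le> 1/4"
  proof (cases "rr \<le> 0")
    case True
    have "rr * q \<le> 0" using True q1 by (intro mult_nonpos_nonneg) auto
    then show ?thesis by linarith
  next
    case False
    then have "rr * q \<le> rr * 1" using q1 by (intro mult_left_mono) auto
    moreover have "rr \<le> 1/4" using r unfolding rr_def L_def .
    ultimately show ?thesis by linarith
  qed
  have "K * (L + pp) + (- K * (L + 1)) + K * (rr * q) = K * (pp - 1 + rr * q)" by (simp add: algebra_simps)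
  moreover have "K * (pp - 1 + rr * q) \<le> 0"
    using K0 D p unfolding pp_def L_def by (intro mult_nonneg_nonpos) auto
  ultimately show ?thesis using A B C by linarith
qed
lemma kernel_prob:
  assumes "transition_kernel T" "x \<ge> 0"
  shows "prob_space (T x)" "sets (T x) = sets state_space" "space (T x) = {0..}"
proof -
  have "x \<in> space state_space" using assms(2) by (simp add: space_restrict_space)
  then have "T x \<in> space (prob_algebra state_space)"
    using assms(1) unfolding transition_kernel_def by (rule measurable_space[rotated])
  then show "prob_space (T x)" "sets (T x) = sets state_space" by (auto simp: space_prob_algebra)
  then show "space (T x) = {0..}" by (simp add: sets_eq_imp_space_eq space_restrict_space)
qed

lemma meas_ss:
  assumes "h \<in> borel_measurable borel" "sets N = sets state_space"
  shows "h \<in> borel_measurable N"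
  by (subst measurable_cong_sets[OF assms(2) refl]) (rule measurable_restrict_space1[OF assms(1)])

lemma VV_borel: "VV \<in> borel_measurable borel"
  unfolding VV_def[abs_def] by measurable

lemma VV_ge: "VV y \<ge> ln 4"
proof -
  have "exp 4 \<le> max y (exp 4)" by simp
  moreover have "0 < max y (exp 4)" by (simp add: less_max_iff_disj)
  ultimately have "4 \<le> ln (max y (exp 4))" by (subst ln_ge_iff) auto
  then show ?thesis unfolding VV_def by (subst ln_le_cancel_iff) auto
qed

lemma VV_nonneg: "VV y \<ge> 0"
  using VV_ge[of y] by (smt (verit) ln_ge_zero)

lemma VV_mono: "y \<le> z \<Longrightarrow> VV y \<le> VV z"
proof -
  assume "y \<le> z"
  have p: "0 < max y (exp 4)" by (simp add: less_max_iff_disj)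
  then have "4 \<le> ln (max y (exp 4))" by (subst ln_ge_iff) auto
  moreover have "max y (exp 4) \<le> max z (exp 4)" using \<open>y \<le> z\<close> by simp
  then have "ln (max y (exp 4)) \<le> ln (max z (exp 4))" using p by simp
  ultimately show ?thesis unfolding VV_def by simp
qed

lemma VV_upper: "y \<ge> 0 \<Longrightarrow> VV y \<le> y + exp 4"
proof -
  assume y: "y \<ge> 0"
  define z where "z = max y (exp 4)"
  have z: "z \<ge> exp 4" "z \<le> y + exp 4" using y unfolding z_def by auto
  have z1: "z > 0" using z(1) exp_gt_zero[of 4] by linarith
  have "4 \<le> ln z" using z z1 by (subst ln_ge_iff) auto
  then have "ln (ln z) \<le> ln z - 1" by (intro ln_le_minus_one) auto
  also have "ln z \<le> z - 1" using z1 by (rule ln_le_minus_one)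
  finally show ?thesis using z unfolding VV_def z_def[symmetric] by linarith
qed

lemma VV_tendsto: "filterlim VV at_top at_top"
proof -
  have "filterlim (\<lambda>y::real. ln (ln y)) at_top at_top"
    by (rule filterlim_compose[OF ln_at_top ln_at_top])
  moreover have "\<forall>\<^sub>F y in at_top. ln (ln y) = VV y"
    using eventually_ge_at_top[of "exp 4"] by eventually_elim (auto simp: VV_def max_def)
  from filterlim_cong[OF refl refl this] show ?thesis using calculation by simp
qed
lemma pow_le_cube: "k \<le> 3 \<Longrightarrow> \<bar>d::real\<bar> ^ k \<le> 1 + \<bar>d\<bar> ^ 3"
proof (cases "\<bar>d\<bar> \<le> 1")
  case True
  assume "k \<le> 3"
  have "\<bar>d\<bar> ^ k \<le> 1" using True by (intro power_le_one) auto
  then show ?thesis by (smt (verit) zero_le_power abs_ge_zero)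
next
  case False
  assume "k \<le> 3"
  have "\<bar>d\<bar> ^ k \<le> \<bar>d\<bar> ^ 3" using False \<open>k \<le> 3\<close> by (intro power_increasing) auto
  then show ?thesis by simp
qed

lemma integrable_pows:
  assumes P: "prob_space N" and S: "sets N = sets state_space" and I: "integrable N (\<lambda>y. \<bar>y - x\<bar> ^ 3)"
    and k: "k \<le> 3"
  shows "integrable N (\<lambda>y. (y - x) ^ k)"
proof -
  interpret prob_space N by fact
  have "integrable N (\<lambda>y. 1 + \<bar>y - x\<bar> ^ 3)" using I by simp
  then show ?thesis
  proof (rule Bochner_Integration.integrable_bound)
    show "(\<lambda>y. (y - x) ^ k) \<in> borel_measurable N" by (rule meas_ss[OF _ S]) measurable
    show "AE y in N. norm ((y - x) ^ k) \<le> norm (1 + \<bar>y - x\<bar> ^ 3)"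
      using pow_le_cube[OF k] by (auto simp: power_abs)
  qed
qed

lemma integrable_VV:
  assumes P: "prob_space N" and S: "sets N = sets state_space" and I: "integrable N (\<lambda>y. \<bar>y - x\<bar> ^ 3)"
    and x: "x \<ge> 0"
  shows "integrable N VV"
proof -
  interpret prob_space N by fact
  have sp: "space N = {0..}" using S by (simp add: sets_eq_imp_space_eq space_restrict_space)
  have "integrable N (\<lambda>y. (1 + x + exp 4) + \<bar>y - x\<bar> ^ 3)" using I by simp
  then show ?thesis
  proof (rule Bochner_Integration.integrable_bound)
    show "VV \<in> borel_measurable N" by (rule meas_ss[OF VV_borel S])
    show "AE y in N. norm (VV y) \<le> norm ((1 + x + exp 4) + \<bar>y - x\<bar> ^ 3)"
    proof (rule AE_I2)
      fix y assume "y \<in> space N"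
      then have y: "y \<ge> 0" using sp by auto
      have "\<bar>y - x\<bar> ^ 1 \<le> 1 + \<bar>y - x\<bar> ^ 3" by (rule pow_le_cube) simp
      then have "y \<le> x + 1 + \<bar>y - x\<bar> ^ 3" by simp
      moreover have "VV y \<le> y + exp 4" using y by (rule VV_upper)
      moreover have "0 \<le> VV y" by (rule VV_nonneg)
      moreover have "0 \<le> \<bar>y - x\<bar> ^ 3" by simp
      ultimately show "norm (VV y) \<le> norm ((1 + x + exp 4) + \<bar>y - x\<bar> ^ 3)"
        using x exp_gt_zero[of 4] by simp
    qed
  qed
qed

lemma drift_T:
  assumes kern: "transition_kernel T" and tm: "\<forall>x\<ge>0. integrable (T x) (\<lambda>y. \<bar>y - x\<bar> ^ 3)"
    and x: "x \<ge> exp 16" and m2: "moment T 2 x > 0"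
    and m1: "moment T 1 x \<le> moment T 2 x / (2 * x) * (1 + \<psi>)"
    and p: "ln x * \<psi> \<le> 1/4" and r: "ln x / x * (moment T 3 x / moment T 2 x) \<le> 1/4"
  shows "(\<integral>\<^sup>+ y. ennreal (VV y) \<partial>T x) \<le> ennreal (VV x)"
proof -
  have x0: "x \<ge> 0" using x exp_gt_zero[of 16] by linarith
  have P: "prob_space (T x)" and S: "sets (T x) = sets state_space" and sp: "space (T x) = {0..}"
    using kernel_prob[OF kern x0] by auto
  interpret prob_space "T x" by (rule P)
  have I: "integrable (T x) (\<lambda>y. \<bar>y - x\<bar> ^ 3)" using tm x0 by auto
  have IV: "integrable (T x) VV" by (rule integrable_VV[OF P S I x0])
  have hb: "has_bochner_integral (T x) (\<lambda>y. (y - x) ^ k) (moment T k x)" if "k \<le> 3" for k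
    unfolding moment_def using integrable_pows[OF P S I that] by (rule has_bochner_integral_integrable)
  have hc: "has_bochner_integral (T x) (\<lambda>y. ln (ln x)) (ln (ln x))"
    using prob_space.prob_space[OF P] by (simp add: has_bochner_integral_iff)
  have hP: "has_bochner_integral (T x) (PP x)
      (ln (ln x) + g1 x * moment T 1 x + g2 x / 2 * moment T 2 x + g3 x / 6 * moment T 3 x)"
    unfolding PP_def[abs_def]
    using hb[of 1] hb[of 2] hb[of 3] hc
    by (intro has_bochner_integral_add has_bochner_integral_mult_right) auto
  have "(\<integral>\<^sup>+ y. ennreal (VV y) \<partial>T x) = ennreal (\<integral>y. VV y \<partial>T x)"
    using IV VV_nonneg by (intro nn_integral_eq_integral) auto
  also have "(\<integral>y. VV y \<partial>T x) \<le> (\<integral>y. PP x y \<partial>T x)"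
    using IV hP by (intro integral_mono) (auto simp: has_bochner_integral_iff sp intro!: VV_le_PP x)
  also have "(\<integral>y. PP x y \<partial>T x) = ln (ln x) + (g1 x * moment T 1 x + g2 x / 2 * moment T 2 x + g3 x / 6 * moment T 3 x)"
    using hP by (simp add: has_bochner_integral_iff)
  also have "\<dots> \<le> ln (ln x)" using drift_alg[OF x m2 m1 p r] by simp
  also have "ln (ln x) = VV x"
  proof -
    have e: "exp 4 \<le> (exp 16::real)" by simp
    have "exp 4 \<le> x" using x e by linarith
    then have "max x (exp 4) = x" by (rule max_absorb1)
    then show ?thesis by (simp add: VV_def)
  qed
  finally show ?thesis by (simp add: ennreal_leI)
qed

lemma finite_T:
  assumes kern: "transition_kernel T" and tm: "\<forall>x\<ge>0. integrable (T x) (\<lambda>y. \<bar>y - x\<bar> ^ 3)"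
    and x0: "x \<ge> 0"
  shows "(\<integral>\<^sup>+ y. ennreal (VV y) \<partial>T x) < \<infinity>"
proof -
  have P: "prob_space (T x)" and S: "sets (T x) = sets state_space"
    using kernel_prob[OF kern x0] by auto
  have I: "integrable (T x) (\<lambda>y. \<bar>y - x\<bar> ^ 3)" using tm x0 by auto
  have IV: "integrable (T x) VV" by (rule integrable_VV[OF P S I x0])
  have "(\<integral>\<^sup>+ y. ennreal (VV y) \<partial>T x) = ennreal (\<integral>y. VV y \<partial>T x)"
    using IV VV_nonneg by (intro nn_integral_eq_integral) auto
  then show ?thesis by simp
qed
lemma filt_sigma:
  "sigma_algebra (space M) (nat_filtration M X n)"
  unfolding nat_filtration_def by (rule sigma_algebra_sigma_sets) auto

lemma filt_basic:
  "i \<le> n \<Longrightarrow> D \<in> sets state_space \<Longrightarrow> X i -` D \<inter> space M \<in> nat_filtration M X n"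
  unfolding nat_filtration_def by (rule sigma_sets.Basic) blast

lemma filt_mono:
  "n \<le> n' \<Longrightarrow> nat_filtration M X n \<subseteq> nat_filtration M X n'"
  unfolding nat_filtration_def using le_trans by (intro sigma_sets_subseteq) blast

lemma filt_sets:
  assumes "\<forall>n. X n \<in> M \<rightarrow>\<^sub>M state_space"
  shows "nat_filtration M X n \<subseteq> sets M"
  unfolding nat_filtration_def
  by (rule sets.sigma_sets_subset) (use assms in \<open>auto intro: measurable_sets\<close>)

lemma markov_ext:
  assumes mc: "markov_chain M X T" and kern: "transition_kernel T"
    and A: "A \<in> nat_filtration M X n" and g: "g \<in> borel_measurable state_space"
  shows "(\<integral>\<^sup>+\<omega>. indicator A \<omega> * g (X (Suc n) \<omega>) \<partial>M) = (\<integral>\<^sup>+\<omega>. indicator A \<omega> * (\<integral>\<^sup>+y. g y \<partial>T (X n \<omega>)) \<partial>M)"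
proof -
  have P: "prob_space M" and Xm: "\<And>n. X n \<in> M \<rightarrow>\<^sub>M state_space"
    and MP: "\<And>n A B. A \<in> nat_filtration M X n \<Longrightarrow> B \<in> sets state_space \<Longrightarrow>
        measure M (A \<inter> (X (Suc n) -` B \<inter> space M)) = (\<integral>\<omega>. indicator A \<omega> * measure (T (X n \<omega>)) B \<partial>M)"
    using mc unfolding markov_chain_def by auto
  interpret prob_space M by (rule P)
  have AM: "A \<in> sets M" using filt_sets[of X M n] Xm A by auto
  define N where "N = density M (indicator A)"
  have sN: "sets N = sets M" "space N = space M" unfolding N_def by auto
  have Xpos: "X n \<omega> \<ge> 0" if "\<omega> \<in> space M" for \<omega>
    using measurable_space[OF Xm[of n] that] by (simp add: space_restrict_space)
  have Km: "(\<lambda>\<omega>. T (X n \<omega>)) \<in> M \<rightarrow>\<^sub>M prob_algebra state_space"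
    using kern unfolding transition_kernel_def by (rule measurable_compose[OF Xm[of n]])
  have KmN: "(\<lambda>\<omega>. T (X n \<omega>)) \<in> N \<rightarrow>\<^sub>M subprob_algebra state_space"
    using measurable_prob_algebraD[OF Km] by (subst measurable_cong_sets[OF sN(1) refl])
  have ne: "space N \<noteq> {}" using not_empty sN by simp
  have XSm: "X (Suc n) \<in> N \<rightarrow>\<^sub>M state_space" using Xm by (subst measurable_cong_sets[OF sN(1) refl])
  have sK: "sets (T (X n \<omega>)) = sets state_space" if "\<omega> \<in> space N" for \<omega>
    using kernel_prob(2)[OF kern Xpos] that sN by auto
  have eq: "distr N state_space (X (Suc n)) = N \<bind> (\<lambda>\<omega>. T (X n \<omega>))"
  proof (rule measure_eqI)
    show "sets (distr N state_space (X (Suc n))) = sets (N \<bind> (\<lambda>\<omega>. T (X n \<omega>)))"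
      using sets_bind[OF sK ne] by simp
  next
    fix B assume "B \<in> sets (distr N state_space (X (Suc n)))"
    then have B: "B \<in> sets state_space" by simp
    have mT: "(\<lambda>\<omega>. measure (T (X n \<omega>)) B) \<in> borel_measurable M"
      using Km B by measurable
    have int: "integrable M (\<lambda>\<omega>. indicator A \<omega> * measure (T (X n \<omega>)) B)"
    proof (rule integrable_const_bound[where B = 1])
      show "AE \<omega> in M. norm (indicator A \<omega> * measure (T (X n \<omega>)) B) \<le> (1::real)"
      proof (rule AE_I2)
        fix \<omega> assume "\<omega> \<in> space M"
        interpret T: prob_space "T (X n \<omega>)" using kernel_prob(1)[OF kern Xpos[OF \<open>\<omega> \<in> space M\<close>]] .
        show "norm (indicator A \<omega> * measure (T (X n \<omega>)) B) \<le> (1::real)"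
          using T.prob_le_1 by (auto simp: indicator_def)
      qed
      show "(\<lambda>\<omega>. indicator A \<omega> * measure (T (X n \<omega>)) B) \<in> borel_measurable M"
        using mT AM by measurable
    qed
    have "emeasure (distr N state_space (X (Suc n))) B = emeasure N (X (Suc n) -` B \<inter> space N)"
      by (rule emeasure_distr[OF XSm B])
    also have "\<dots> = (\<integral>\<^sup>+ \<omega>. indicator A \<omega> * indicator (X (Suc n) -` B \<inter> space M) \<omega> \<partial>M)"
      unfolding N_def using AM Xm B sN by (subst emeasure_density) (auto intro!: measurable_sets)
    also have "\<dots> = (\<integral>\<^sup>+ \<omega>. indicator (A \<inter> (X (Suc n) -` B \<inter> space M)) \<omega> \<partial>M)"
      by (intro nn_integral_cong) (auto simp: indicator_def)
    also have "\<dots> = emeasure M (A \<inter> (X (Suc n) -` B \<inter> space M))"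
      using AM Xm B by (intro nn_integral_indicator) (auto intro!: measurable_sets)
    also have "\<dots> = ennreal (measure M (A \<inter> (X (Suc n) -` B \<inter> space M)))"
      by (simp add: emeasure_eq_measure)
    also have "\<dots> = ennreal (\<integral>\<omega>. indicator A \<omega> * measure (T (X n \<omega>)) B \<partial>M)"
      using MP[OF A B] by simp
    also have "\<dots> = (\<integral>\<^sup>+ \<omega>. ennreal (indicator A \<omega> * measure (T (X n \<omega>)) B) \<partial>M)"
      using int by (intro nn_integral_eq_integral[symmetric]) auto
    also have "\<dots> = (\<integral>\<^sup>+ \<omega>. indicator A \<omega> * emeasure (T (X n \<omega>)) B \<partial>M)"
    proof (intro nn_integral_cong)
      fix \<omega> assume "\<omega> \<in> space M"
      interpret T: prob_space "T (X n \<omega>)" using kernel_prob(1)[OF kern Xpos[OF \<open>\<omega> \<in> space M\<close>]] .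
      show "ennreal (indicator A \<omega> * measure (T (X n \<omega>)) B) = indicator A \<omega> * emeasure (T (X n \<omega>)) B"
        by (simp add: T.emeasure_eq_measure indicator_def)
    qed
    also have "\<dots> = (\<integral>\<^sup>+ \<omega>. emeasure (T (X n \<omega>)) B \<partial>N)"
      unfolding N_def using AM measurable_compose[OF measurable_prob_algebraD[OF Km] measurable_emeasure_subprob_algebra[OF B]]
      by (subst nn_integral_density) auto
    also have "\<dots> = emeasure (N \<bind> (\<lambda>\<omega>. T (X n \<omega>))) B"
      by (rule emeasure_bind[OF ne KmN B, symmetric])
    finally show "emeasure (distr N state_space (X (Suc n))) B = emeasure (N \<bind> (\<lambda>\<omega>. T (X n \<omega>))) B" .
  qed
  have "(\<integral>\<^sup>+\<omega>. indicator A \<omega> * g (X (Suc n) \<omega>) \<partial>M) = (\<integral>\<^sup>+\<omega>. g (X (Suc n) \<omega>) \<partial>N)"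
    unfolding N_def using AM Xm g by (subst nn_integral_density) auto
  also have "\<dots> = (\<integral>\<^sup>+y. g y \<partial>distr N state_space (X (Suc n)))"
    using XSm g by (intro nn_integral_distr[symmetric]) auto
  also have "\<dots> = (\<integral>\<^sup>+y. g y \<partial>(N \<bind> (\<lambda>\<omega>. T (X n \<omega>))))" by (simp add: eq)
  also have "\<dots> = (\<integral>\<^sup>+\<omega>. (\<integral>\<^sup>+y. g y \<partial>T (X n \<omega>)) \<partial>N)"
    by (rule nn_integral_bind[OF g KmN])
  also have "\<dots> = (\<integral>\<^sup>+\<omega>. indicator A \<omega> * (\<integral>\<^sup>+y. g y \<partial>T (X n \<omega>)) \<partial>M)"
    unfolding N_def using AM measurable_compose[OF measurable_prob_algebraD[OF Km] nn_integral_measurable_subprob_algebra[OF g]]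
    by (subst nn_integral_density) auto
  finally show ?thesis .
qed
primrec Aset :: "'a measure \<Rightarrow> (nat \<Rightarrow> 'a \<Rightarrow> real) \<Rightarrow> real set \<Rightarrow> nat \<Rightarrow> 'a set" where
  "Aset M X S 0 = space M"
| "Aset M X S (Suc n) = Aset M X S n \<inter> (X (Suc n) -` S \<inter> space M)"

lemma Aset_filt:
  assumes "S \<in> sets state_space"
  shows "Aset M X S n \<in> nat_filtration M X n"
proof (induction n)
  case 0
  then show ?case unfolding nat_filtration_def by (simp add: sigma_sets_top)
next
  case (Suc n)
  interpret sigma_algebra "space M" "nat_filtration M X (Suc n)" by (rule filt_sigma)
  have "Aset M X S n \<in> nat_filtration M X (Suc n)" using Suc filt_mono[of n "Suc n" M X] by auto
  moreover have "X (Suc n) -` S \<inter> space M \<in> nat_filtration M X (Suc n)" using assms by (intro filt_basic) auto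
  ultimately show ?case by auto
qed

lemma Aset_sub: "j \<le> n \<Longrightarrow> Aset M X S n \<subseteq> Aset M X S j"
  by (induction n) (auto simp: le_Suc_eq)

lemma Aset_space: "Aset M X S n \<subseteq> space M"
  by (induction n) auto

lemma Aset_mem: "\<omega> \<in> Aset M X S n \<Longrightarrow> 1 \<le> j \<Longrightarrow> j \<le> n \<Longrightarrow> X j \<omega> \<in> S"
proof (induction n)
  case 0 then show ?case by simp
next
  case (Suc n) then show ?case by (cases "j = Suc n") (auto simp: le_Suc_eq)
qed

lemma A_null:
  assumes mc: "markov_chain M X T" and kern: "transition_kernel T"
    and iii: "\<forall>m::nat. m \<ge> 1 \<longrightarrow> (\<exists>\<delta><1. \<forall>x0\<in>{0..real m}. measure (T x0) {0..real m} \<le> \<delta>)"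
    and K: "0 < K" and S: "S \<subseteq> {0..K}" "S \<in> sets state_space"
  shows "emeasure M (\<Inter>n. Aset M X S n) = 0"
proof -
  have P: "prob_space M" and Xm: "\<And>n. X n \<in> M \<rightarrow>\<^sub>M state_space"
    and MP: "\<And>n A B. A \<in> nat_filtration M X n \<Longrightarrow> B \<in> sets state_space \<Longrightarrow>
        measure M (A \<inter> (X (Suc n) -` B \<inter> space M)) = (\<integral>\<omega>. indicator A \<omega> * measure (T (X n \<omega>)) B \<partial>M)"
    using mc unfolding markov_chain_def by auto
  interpret prob_space M by (rule P)
  define m' where "m' = nat \<lceil>K\<rceil>"
  have m'1: "m' \<ge> 1" and Km': "K \<le> real m'" unfolding m'_def using K by linarith+
  obtain \<delta> where d1: "\<delta> < 1" and dB: "\<And>x0. x0 \<in> {0..real m'} \<Longrightarrow> measure (T x0) {0..real m'} \<le> \<delta>"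
    using iii m'1 by blast
  have "0 \<le> Sigma_Algebra.measure (T 0) {0..real m'}" by (rule Measure_Space.measure_nonneg)
  moreover have "Sigma_Algebra.measure (T 0) {0..real m'} \<le> \<delta>" using dB[of 0] by simp
  ultimately have d0: "0 \<le> \<delta>" by linarith
  define B where "B = {0..real m'}"
  have Bs: "B \<in> sets state_space" unfolding B_def by (simp add: sets_restrict_space_iff)
  have As: "Aset M X S n \<in> events" for n
    using Aset_filt[OF S(2)] filt_sets[of X M n] Xm by auto
  have Xpos: "X n \<omega> \<ge> 0" if "\<omega> \<in> space M" for n \<omega>
    using measurable_space[OF Xm[of n] that] by (simp add: space_restrict_space)
  have bound: "prob (Aset M X S (Suc n)) \<le> \<delta> ^ n" for n
  proof (induction n)
    case 0 then show ?case by simp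
  next
    case (Suc n)
    let ?A = "Aset M X S (Suc n)"
    have "prob (Aset M X S (Suc (Suc n))) \<le> prob (?A \<inter> (X (Suc (Suc n)) -` B \<inter> space M))"
    proof (rule finite_measure_mono)
      show "Aset M X S (Suc (Suc n)) \<subseteq> ?A \<inter> (X (Suc (Suc n)) -` B \<inter> space M)"
        using S(1) Km' by (auto simp: B_def)
      show "?A \<inter> (X (Suc (Suc n)) -` B \<inter> space M) \<in> events"
        using As[of "Suc n"] measurable_sets[OF Xm Bs] by auto
    qed
    also have "\<dots> = (\<integral>\<omega>. indicator ?A \<omega> * measure (T (X (Suc n) \<omega>)) B \<partial>M)"
      by (rule MP[OF Aset_filt[OF S(2)] Bs])
    also have "\<dots> \<le> (\<integral>\<omega>. indicator ?A \<omega> * \<delta> \<partial>M)"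
    proof (rule integral_mono)
      have Km: "(\<lambda>\<omega>. T (X (Suc n) \<omega>)) \<in> M \<rightarrow>\<^sub>M prob_algebra state_space"
        using kern unfolding transition_kernel_def by (rule measurable_compose[OF Xm])
      have mT: "(\<lambda>\<omega>. measure (T (X (Suc n) \<omega>)) B) \<in> borel_measurable M"
        using Km Bs by measurable
      show "integrable M (\<lambda>\<omega>. indicator ?A \<omega> * measure (T (X (Suc n) \<omega>)) B)"
      proof (rule integrable_const_bound[where B = 1])
        show "AE \<omega> in M. norm (indicator ?A \<omega> * measure (T (X (Suc n) \<omega>)) B) \<le> (1::real)"
        proof (rule AE_I2)
          fix \<omega> assume "\<omega> \<in> space M"
          interpret T: prob_space "T (X (Suc n) \<omega>)" using kernel_prob(1)[OF kern Xpos[OF \<open>\<omega> \<in> space M\<close>]] .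
          show "norm (indicator ?A \<omega> * measure (T (X (Suc n) \<omega>)) B) \<le> (1::real)"
            using T.prob_le_1 by (auto simp: indicator_def)
        qed
        show "(\<lambda>\<omega>. indicator ?A \<omega> * measure (T (X (Suc n) \<omega>)) B) \<in> borel_measurable M"
          using mT As by measurable
      qed
      show "integrable M (\<lambda>\<omega>. indicator ?A \<omega> * \<delta>)"
        using As[of "Suc n"] by (intro integrable_mult_left integrable_real_indicator) (auto simp: emeasure_eq_measure simp del: Aset.simps)
      fix \<omega> assume "\<omega> \<in> space M"
      show "indicator ?A \<omega> * measure (T (X (Suc n) \<omega>)) B \<le> indicator ?A \<omega> * \<delta>"
      proof (cases "\<omega> \<in> ?A")
        case True
        then have "X (Suc n) \<omega> \<in> S" by (intro Aset_mem[of \<omega> M X S "Suc n"]) auto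
        then have "X (Suc n) \<omega> \<in> B" using S(1) Km' by (auto simp: B_def)
        then show ?thesis using True dB by (simp add: B_def)
      qed simp
    qed
    also have "(\<integral>\<omega>. indicator ?A \<omega> * \<delta> \<partial>M) = prob ?A * \<delta>"
      using Aset_space[of M X S "Suc n"] by (simp add: Int_absorb2 del: Aset.simps)
    also have "\<dots> \<le> \<delta> ^ n * \<delta>" using Suc d0 by (intro mult_right_mono) auto
    finally show ?case by (simp add: mult.commute)
  qed
  have inter: "(\<Inter>n. Aset M X S n) \<in> events" using As by auto
  have "prob (\<Inter>n. Aset M X S n) \<le> 0"
  proof (rule LIMSEQ_le_const[OF LIMSEQ_realpow_zero[OF d0 d1]], intro exI allI impI)
    fix n :: nat
    have "prob (\<Inter>n. Aset M X S n) \<le> prob (Aset M X S (Suc n))"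
      by (rule finite_measure_mono[OF _ As]) blast
    then show "prob (\<Inter>n. Aset M X S n) \<le> \<delta> ^ n" using bound[of n] by linarith
  qed
  then show ?thesis using inter by (simp add: emeasure_eq_measure measure_le_0_iff)
qed
lemma VV_meas_ss: "(\<lambda>y. ennreal (VV y)) \<in> borel_measurable state_space"
proof -
  have "(\<lambda>y. ennreal (VV y)) \<in> borel_measurable borel" using VV_borel by measurable
  then show ?thesis by (rule measurable_restrict_space1)
qed

lemma exit_bound:
  assumes mc: "markov_chain M X T" and kern: "transition_kernel T"
    and drift: "\<forall>x\<ge>m. (\<integral>\<^sup>+ y. ennreal (VV y) \<partial>T x) \<le> ennreal (VV x)"
    and X0: "AE \<omega> in M. X 0 \<omega> = x0"
    and Km: "m \<le> K" and m0: "0 \<le> m"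
  shows "ennreal (VV K) * emeasure M (\<Union>n. \<Union>j\<le>n. Aset M X {m..K} j \<inter> (X (Suc j) -` {K<..} \<inter> space M))
           \<le> (\<integral>\<^sup>+ y. ennreal (VV y) \<partial>T x0)"
proof -
  have P: "prob_space M" and Xm: "\<And>n. X n \<in> M \<rightarrow>\<^sub>M state_space"
    using mc unfolding markov_chain_def by auto
  interpret prob_space M by (rule P)
  define S where "S = {m..K}"
  define A where "A = Aset M X S"
  define B where "B j = A j \<inter> (X (Suc j) -` {K<..} \<inter> space M)" for j
  define U where "U n = (\<Union>j\<le>n. B j)" for n
  define c where "c = (\<integral>\<^sup>+ y. ennreal (VV y) \<partial>T x0)"
  define V where "V = (\<lambda>y. ennreal (VV y))"
  have Vm: "V \<in> borel_measurable state_space" unfolding V_def by (rule VV_meas_ss)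
  have Vb: "V \<in> borel_measurable borel" unfolding V_def using VV_borel by measurable
  have Ss: "S \<in> sets state_space" unfolding S_def using m0 by (simp add: sets_restrict_space_iff)
  have Af: "A n \<in> nat_filtration M X n" for n unfolding A_def by (rule Aset_filt[OF Ss])
  have As: "A n \<in> events" for n using Af[of n] filt_sets[of X M n] Xm by auto
  have "{K<..} \<subseteq> {0::real..}" using m0 Km by auto
  then have Kset: "{K<..} \<in> sets state_space" by (simp add: sets_restrict_space_iff)
  have Bs: "B n \<in> events" for n unfolding B_def using As[of n] measurable_sets[OF Xm Kset] by auto
  have Us: "U n \<in> events" for n unfolding U_def using Bs by auto
  have XVm: "(\<lambda>\<omega>. V (X n \<omega>)) \<in> borel_measurable M" for n
    using measurable_compose[OF Xm Vm] .
  have A0: "A 0 = space M" unfolding A_def by simp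
  have ASuc: "A (Suc n) = A n \<inter> (X (Suc n) -` S \<inter> space M)" for n unfolding A_def by simp
  have step: "(\<integral>\<^sup>+\<omega>. indicator (A (Suc n)) \<omega> * V (X (Suc n) \<omega>) \<partial>M) + ennreal (VV K) * emeasure M (B n)
      \<le> (\<integral>\<^sup>+\<omega>. indicator (A n) \<omega> * V (X (Suc n) \<omega>) \<partial>M)" for n
  proof -
    have "ennreal (VV K) * emeasure M (B n) = (\<integral>\<^sup>+\<omega>. ennreal (VV K) * indicator (B n) \<omega> \<partial>M)"
      using Bs by (simp add: nn_integral_cmult_indicator)
    also have "\<dots> \<le> (\<integral>\<^sup>+\<omega>. indicator (B n) \<omega> * V (X (Suc n) \<omega>) \<partial>M)"
    proof (intro nn_integral_mono)
      fix \<omega> assume "\<omega> \<in> space M"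
      show "ennreal (VV K) * indicator (B n) \<omega> \<le> indicator (B n) \<omega> * V (X (Suc n) \<omega>)"
      proof (cases "\<omega> \<in> B n")
        case True
        then have "K \<le> X (Suc n) \<omega>" unfolding B_def by auto
        then have "VV K \<le> VV (X (Suc n) \<omega>)" by (rule VV_mono)
        then show ?thesis using True by (simp add: V_def ennreal_leI)
      qed simp
    qed
    finally have 1: "ennreal (VV K) * emeasure M (B n) \<le> (\<integral>\<^sup>+\<omega>. indicator (B n) \<omega> * V (X (Suc n) \<omega>) \<partial>M)" .
    have "(\<integral>\<^sup>+\<omega>. indicator (A (Suc n)) \<omega> * V (X (Suc n) \<omega>) \<partial>M) + (\<integral>\<^sup>+\<omega>. indicator (B n) \<omega> * V (X (Suc n) \<omega>) \<partial>M)
        = (\<integral>\<^sup>+\<omega>. indicator (A (Suc n)) \<omega> * V (X (Suc n) \<omega>) + indicator (B n) \<omega> * V (X (Suc n) \<omega>) \<partial>M)"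
      using As Bs XVm by (intro nn_integral_add[symmetric]) auto
    also have "\<dots> \<le> (\<integral>\<^sup>+\<omega>. indicator (A n) \<omega> * V (X (Suc n) \<omega>) \<partial>M)"
    proof (intro nn_integral_mono)
      fix \<omega> assume "\<omega> \<in> space M"
      show "indicator (A (Suc n)) \<omega> * V (X (Suc n) \<omega>) + indicator (B n) \<omega> * V (X (Suc n) \<omega>)
          \<le> indicator (A n) \<omega> * V (X (Suc n) \<omega>)"
        unfolding ASuc B_def S_def by (auto simp: indicator_def)
    qed
    finally show ?thesis using 1 by (meson add_left_mono order_trans)
  qed
  have dstep: "(\<integral>\<^sup>+\<omega>. indicator (A (Suc n)) \<omega> * V (X (Suc (Suc n)) \<omega>) \<partial>M)
      \<le> (\<integral>\<^sup>+\<omega>. indicator (A (Suc n)) \<omega> * V (X (Suc n) \<omega>) \<partial>M)" for n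
  proof -
    have "(\<integral>\<^sup>+\<omega>. indicator (A (Suc n)) \<omega> * V (X (Suc (Suc n)) \<omega>) \<partial>M)
        = (\<integral>\<^sup>+\<omega>. indicator (A (Suc n)) \<omega> * (\<integral>\<^sup>+y. V y \<partial>T (X (Suc n) \<omega>)) \<partial>M)"
      by (rule markov_ext[OF mc kern Af Vm])
    also have "\<dots> \<le> (\<integral>\<^sup>+\<omega>. indicator (A (Suc n)) \<omega> * V (X (Suc n) \<omega>) \<partial>M)"
    proof (intro nn_integral_mono)
      fix \<omega> assume "\<omega> \<in> space M"
      show "indicator (A (Suc n)) \<omega> * (\<integral>\<^sup>+y. V y \<partial>T (X (Suc n) \<omega>)) \<le> indicator (A (Suc n)) \<omega> * V (X (Suc n) \<omega>)"
      proof (cases "\<omega> \<in> A (Suc n)")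
        case True
        then have "X (Suc n) \<omega> \<in> S" unfolding A_def by (intro Aset_mem[of \<omega> M X S "Suc n"]) auto
        then have "X (Suc n) \<omega> \<ge> m" unfolding S_def by auto
        then show ?thesis using True drift unfolding V_def by auto
      qed simp
    qed
    finally show ?thesis .
  qed
  have start: "(\<integral>\<^sup>+\<omega>. indicator (A 0) \<omega> * V (X (Suc 0) \<omega>) \<partial>M) = c"
  proof -
    have "(\<integral>\<^sup>+\<omega>. indicator (A 0) \<omega> * V (X (Suc 0) \<omega>) \<partial>M)
        = (\<integral>\<^sup>+\<omega>. indicator (A 0) \<omega> * (\<integral>\<^sup>+y. V y \<partial>T (X 0 \<omega>)) \<partial>M)"
      by (rule markov_ext[OF mc kern Af Vm])
    also have "\<dots> = (\<integral>\<^sup>+\<omega>. c \<partial>M)"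
      using X0 by (intro nn_integral_cong_AE) (auto simp: A0 c_def V_def)
    also have "\<dots> = c" by (simp add: emeasure_space_1)
    finally show ?thesis .
  qed
  have claim: "(\<integral>\<^sup>+\<omega>. indicator (A (Suc n)) \<omega> * V (X (Suc n) \<omega>) \<partial>M) + ennreal (VV K) * emeasure M (U n) \<le> c" for n
  proof (induction n)
    case 0
    have "U 0 = B 0" unfolding U_def by simp
    then show ?case using step[of 0] start by simp
  next
    case (Suc n)
    have disj: "U n \<inter> B (Suc n) = {}"
    proof (safe)
      fix \<omega> assume u: "\<omega> \<in> U n" and b: "\<omega> \<in> B (Suc n)"
      from u obtain j where j: "j \<le> n" "\<omega> \<in> B j" unfolding U_def by auto
      have "\<omega> \<in> A (Suc n)" using b unfolding B_def by auto
      then have "X (Suc j) \<omega> \<in> S" unfolding A_def using j by (intro Aset_mem[of \<omega> M X S "Suc n"]) auto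
      then show "\<omega> \<in> {}" using j unfolding B_def S_def by auto
    qed
    have U: "U (Suc n) = U n \<union> B (Suc n)" unfolding U_def by (auto simp: le_Suc_eq)
    have em: "emeasure M (U (Suc n)) = emeasure M (U n) + emeasure M (B (Suc n))"
      unfolding U using Us Bs disj by (intro plus_emeasure[symmetric]) auto
    have "(\<integral>\<^sup>+\<omega>. indicator (A (Suc (Suc n))) \<omega> * V (X (Suc (Suc n)) \<omega>) \<partial>M) + ennreal (VV K) * emeasure M (U (Suc n))
        = ((\<integral>\<^sup>+\<omega>. indicator (A (Suc (Suc n))) \<omega> * V (X (Suc (Suc n)) \<omega>) \<partial>M) + ennreal (VV K) * emeasure M (B (Suc n)))
          + ennreal (VV K) * emeasure M (U n)"
      unfolding em by (simp add: distrib_left ac_simps)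
    also have "\<dots> \<le> (\<integral>\<^sup>+\<omega>. indicator (A (Suc n)) \<omega> * V (X (Suc (Suc n)) \<omega>) \<partial>M) + ennreal (VV K) * emeasure M (U n)"
      using step[of "Suc n"] by (rule add_right_mono)
    also have "\<dots> \<le> (\<integral>\<^sup>+\<omega>. indicator (A (Suc n)) \<omega> * V (X (Suc n) \<omega>) \<partial>M) + ennreal (VV K) * emeasure M (U n)"
      using dstep[of n] by (rule add_right_mono)
    also have "\<dots> \<le> c" by (rule Suc)
    finally show ?case .
  qed
  have Ub: "ennreal (VV K) * emeasure M (U n) \<le> c" for n
    using claim[of n] by (meson add_increasing order_trans zero_le le_iff_add order_refl) 
  have inc: "incseq U" unfolding U_def incseq_def by (auto intro: le_trans)
  have "ennreal (VV K) * emeasure M (\<Union>n. U n) = ennreal (VV K) * (SUP n. emeasure M (U n))"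
    using Us inc by (subst SUP_emeasure_incseq) auto
  also have "\<dots> = (SUP n. ennreal (VV K) * emeasure M (U n))" by (rule SUP_mult_left_ennreal)
  also have "\<dots> \<le> c" using Ub by (intro SUP_least) auto
  finally show ?thesis unfolding U_def B_def A_def S_def c_def .
qed
lemma recurrence_core:
  assumes mc: "markov_chain M X T" and kern: "transition_kernel T" and m0: "0 < m"
    and drift: "\<forall>x\<ge>m. (\<integral>\<^sup>+ y. ennreal (VV y) \<partial>T x) \<le> ennreal (VV x)"
    and fin: "(\<integral>\<^sup>+ y. ennreal (VV y) \<partial>T x0) < \<infinity>"
    and iii: "\<forall>m::nat. m \<ge> 1 \<longrightarrow> (\<exists>\<delta><1. \<forall>x0\<in>{0..real m}. measure (T x0) {0..real m} \<le> \<delta>)"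
    and X0: "AE \<omega> in M. X 0 \<omega> = x0"
  shows "measure M {\<omega> \<in> space M. \<exists>n\<ge>1. X n \<omega> \<in> {0..<m}} = 1"
proof -
  have P: "prob_space M" and Xm: "\<And>n. X n \<in> M \<rightarrow>\<^sub>M state_space"
    using mc unfolding markov_chain_def by auto
  interpret prob_space M by (rule P)
  define c where "c = (\<integral>\<^sup>+ y. ennreal (VV y) \<partial>T x0)"
  define F where "F = {\<omega> \<in> space M. \<forall>n\<ge>1. X n \<omega> \<notin> {0..<m}}"
  have "{0..<m} \<subseteq> {0::real..}" by auto
  then have Cs: "{0..<m} \<in> sets state_space" by (simp add: sets_restrict_space_iff)
  have Fs: "F \<in> events"
  proof -
    have "F = space M - (\<Union>n\<in>{1..}. (X n -` {0..<m} \<inter> space M))" unfolding F_def by auto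
    also have "\<dots> \<in> events" using measurable_sets[OF Xm Cs] by (intro sets.Diff sets.top sets.countable_UN') auto
    finally show ?thesis .
  qed
  have Xpos: "X n \<omega> \<ge> 0" if "\<omega> \<in> space M" for n \<omega>
    using measurable_space[OF Xm[of n] that] by (simp add: space_restrict_space)
  have key: "ennreal (VV K) * emeasure M F \<le> c" if Km: "m \<le> K" for K
  proof -
    define A where "A = Aset M X {m..K}"
    define B where "B j = A j \<inter> (X (Suc j) -` {K<..} \<inter> space M)" for j
    have Ss: "{m..K} \<in> sets state_space" using m0 by (simp add: sets_restrict_space_iff)
    have "{K<..} \<subseteq> {0::real..}" using m0 Km by auto
    then have Kset: "{K<..} \<in> sets state_space" by (simp add: sets_restrict_space_iff)
    have As: "A n \<in> events" for n unfolding A_def using Aset_filt[OF Ss] filt_sets[of X M n] Xm by auto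
    have Bs: "B n \<in> events" for n unfolding B_def using As[of n] measurable_sets[OF Xm Kset] by auto
    have sub: "F \<subseteq> (\<Inter>n. A n) \<union> (\<Union>n. \<Union>j\<le>n. B j)"
    proof
      fix \<omega> assume w: "\<omega> \<in> F"
      then have ws: "\<omega> \<in> space M" unfolding F_def by auto
      have ge: "X n \<omega> \<ge> m" if "n \<ge> 1" for n
        using w that Xpos[OF ws, of n] unfolding F_def by force
      have "\<omega> \<in> A n \<or> (\<exists>j<n. \<omega> \<in> B j)" for n
      proof (induction n)
        case 0 then show ?case using ws by (simp add: A_def)
      next
        case (Suc n)
        show ?case
        proof (cases "\<exists>j<n. \<omega> \<in> B j")
          case True then show ?thesis by (auto intro: less_SucI)
        next
          case False
          then have a: "\<omega> \<in> A n" using Suc by auto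
          show ?thesis
          proof (cases "X (Suc n) \<omega> \<le> K")
            case True
            then have "\<omega> \<in> A (Suc n)" using a ge[of "Suc n"] ws by (simp add: A_def)
            then show ?thesis by simp
          next
            case False
            then have "\<omega> \<in> B n" using a ws by (simp add: B_def)
            then show ?thesis by auto
          qed
        qed
      qed
      then show "\<omega> \<in> (\<Inter>n. A n) \<union> (\<Union>n. \<Union>j\<le>n. B j)" by (auto intro: less_imp_le)
    qed
    have null: "emeasure M (\<Inter>n. A n) = 0" unfolding A_def
      using m0 Km by (intro A_null[OF mc kern iii, where K = K and S = "{m..K}"] Ss) auto
    have Is: "(\<Inter>n. A n) \<in> events" using As by auto
    have Us: "(\<Union>n. \<Union>j\<le>n. B j) \<in> events" using Bs by auto
    have "emeasure M F \<le> emeasure M ((\<Inter>n. A n) \<union> (\<Union>n. \<Union>j\<le>n. B j))"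
      using sub Is Us by (intro emeasure_mono) auto
    also have "\<dots> \<le> emeasure M (\<Inter>n. A n) + emeasure M (\<Union>n. \<Union>j\<le>n. B j)"
      using Is Us by (rule emeasure_subadditive)
    also have "\<dots> = emeasure M (\<Union>n. \<Union>j\<le>n. B j)" using null by simp
    finally have "ennreal (VV K) * emeasure M F \<le> ennreal (VV K) * emeasure M (\<Union>n. \<Union>j\<le>n. B j)"
      by (rule mult_left_mono) simp
    also have "\<dots> \<le> c" unfolding B_def A_def c_def
      using m0 by (intro exit_bound[OF mc kern drift X0 Km]) auto
    finally show ?thesis .
  qed
  define p where "p = prob F"
  define c' where "c' = enn2real c"
  have cc: "c = ennreal c'" unfolding c'_def c_def using fin by simp
  have keyr: "VV K * p \<le> c'" if "m \<le> K" for K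
  proof -
    have "ennreal (VV K * p) = ennreal (VV K) * emeasure M F"
      unfolding p_def using VV_nonneg[of K] by (simp add: emeasure_eq_measure ennreal_mult)
    then have "ennreal (VV K * p) \<le> ennreal c'" using key[OF that] cc by simp
    moreover have "0 \<le> c'" unfolding c'_def by simp
    ultimately show ?thesis by (simp add: ennreal_le_iff)
  qed
  have p0: "p = 0"
  proof (rule ccontr)
    assume "p \<noteq> 0"
    then have pp: "p > 0" unfolding p_def by (simp add: less_le)
    have "\<forall>\<^sub>F K in at_top. c' / p + 1 \<le> VV K"
      using VV_tendsto unfolding filterlim_at_top by blast
    moreover have "\<forall>\<^sub>F K in at_top. m \<le> K" by (rule eventually_ge_at_top)
    ultimately have "\<forall>\<^sub>F K in at_top. c' / p + 1 \<le> VV K \<and> m \<le> K" by (rule eventually_conj)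
    then obtain K where K1: "c' / p + 1 \<le> VV K" and K2: "m \<le> K"
      unfolding eventually_at_top_linorder by auto
    have "(c' / p + 1) * p \<le> VV K * p" using K1 pp by (intro mult_right_mono) auto
    moreover have "(c' / p + 1) * p = c' + p" using pp by (simp add: field_simps)
    ultimately have "c' + p \<le> VV K * p" by simp
    then show False using keyr[OF K2] pp by linarith
  qed
  have "{\<omega> \<in> space M. \<exists>n\<ge>1. X n \<omega> \<in> {0..<m}} = space M - F" unfolding F_def by auto
  then show ?thesis using prob_compl[OF Fs] p0 unfolding p_def by simp
qed

theorem theorem4p5:
  fixes T :: "real \<Rightarrow> real measure"
  assumes kernel: "transition_kernel T"
    and third_moment: "\<forall>x\<ge>0. integrable (T x) (\<lambda>y. \<bar>y - x\<bar> ^ 3)"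
    and mu2_pos: "\<forall>\<^sub>F x in at_top. moment T 2 x > 0"
    and cond_i: "\<exists>\<psi>1 :: real \<Rightarrow> real.
        (\<forall>\<^sub>F x in at_top. moment T 1 x \<le> moment T 2 x / (2 * x) * (1 + \<psi>1 x)) \<and>
        ((\<lambda>x. ln x * \<psi>1 x) \<longlongrightarrow> 0) at_top"
    and cond_ii: "((\<lambda>x. ln x / x * (moment T 3 x / moment T 2 x)) \<longlongrightarrow> 0) at_top"
    and cond_iii: "\<forall>m::nat. m \<ge> 1 \<longrightarrow> (\<exists>\<delta><1. \<forall>x0\<in>{0..real m}. measure (T x0) {0..real m} \<le> \<delta>)"
  shows "\<exists>m::real. 0 < m \<and> recurrent_set T {0..<m}"
proof -
  obtain \<psi> :: "real \<Rightarrow> real" where e1: "\<forall>\<^sub>F x in at_top. moment T 1 x \<le> moment T 2 x / (2 * x) * (1 + \<psi> x)"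
    and t1: "((\<lambda>x. ln x * \<psi> x) \<longlongrightarrow> 0) at_top"
    using cond_i by blast
  have e2: "\<forall>\<^sub>F x in at_top. ln x * \<psi> x < 1/4"
    using t1 by (rule order_tendstoD(2)) simp
  have e3: "\<forall>\<^sub>F x in at_top. ln x / x * (moment T 3 x / moment T 2 x) < 1/4"
    using cond_ii by (rule order_tendstoD(2)) simp
  have e4: "\<forall>\<^sub>F x in at_top. exp 16 \<le> (x::real)" by (rule eventually_ge_at_top)
  have "\<forall>\<^sub>F x in at_top. moment T 2 x > 0 \<and> moment T 1 x \<le> moment T 2 x / (2 * x) * (1 + \<psi> x)
      \<and> ln x * \<psi> x < 1/4 \<and> ln x / x * (moment T 3 x / moment T 2 x) < 1/4 \<and> exp 16 \<le> x"
    using mu2_pos e1 e2 e3 e4 by eventually_elim auto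
  then obtain N where N: "\<And>x. x \<ge> N \<Longrightarrow> moment T 2 x > 0 \<and> moment T 1 x \<le> moment T 2 x / (2 * x) * (1 + \<psi> x)
      \<and> ln x * \<psi> x < 1/4 \<and> ln x / x * (moment T 3 x / moment T 2 x) < 1/4 \<and> exp 16 \<le> x"
    unfolding eventually_at_top_linorder by blast
  define m where "m = max N (exp 16)"
  have m0: "0 < m" unfolding m_def by (simp add: less_max_iff_disj)
  have drift: "\<forall>x\<ge>m. (\<integral>\<^sup>+ y. ennreal (VV y) \<partial>T x) \<le> ennreal (VV x)"
  proof (intro allI impI)
    fix x assume "m \<le> x"
    then have "x \<ge> N" unfolding m_def by simp
    from N[OF this] show "(\<integral>\<^sup>+ y. ennreal (VV y) \<partial>T x) \<le> ennreal (VV x)"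
      by (intro drift_T[OF kernel third_moment, where \<psi> = "\<psi> x"]) auto
  qed
  have "recurrent_set T {0..<m}"
    unfolding recurrent_set_def
  proof (intro allI impI)
    fix x0 :: real and M :: "(nat \<Rightarrow> real) measure" and X
    assume x0: "0 \<le> x0" and mc: "markov_chain M X T" and X0: "AE \<omega> in M. X 0 \<omega> = x0"
    show "measure M {\<omega> \<in> space M. \<exists>n\<ge>1. X n \<omega> \<in> {0..<m}} = 1"
      by (rule recurrence_core[OF mc kernel m0 drift finite_T[OF kernel third_moment x0] cond_iii X0])
  qed
  then show ?thesis using m0 by blast
qed
end
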